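(* Let $\mathcal{H}$ be a separable complex Hilbert space, let $N \in B(\mathcal{H})$ be normal, let $U$ be a unitary operator belonging to $\mathcal{W}^*(N)$, let $a \in \mathbb{C}$ and $v \in \mathcal{H}$. Then the operator $T = N + a(Uv \otimes v)$ is a complex symmetric operator.
   Context: $\mathcal{W}^*(N)$ denotes the von Neumann algebra generated by $N$. For $x,y\in\mathcal{H}$, $x\otimes y$ denotes the rank-one operator $f \mapsto \langle f, y\rangle x$. A conjugation on $\mathcal{H}$ is a conjugate-linear map $C:\mathcal{H}\to\mathcal{H}$ that is isometric and involutive ($C^2=I$). An operator $T$ is complex symmetric if $T = CT^*C$ for some conjugation $C$. *)

theory Defs
  imports "HOL-Analysis.Analysis"
begin

text \<open>HOL-Analysis has only real inner product spaces, so complex scalar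
multiplication and a complex inner product (linear in the first argument,
conjugate-linear in the second) are introduced as a type class.\<close>

class complex_inner = real_normed_vector +
  fixes cscale :: "complex \<Rightarrow> 'a \<Rightarrow> 'a"
    and cinner :: "'a \<Rightarrow> 'a \<Rightarrow> complex"
  assumes cscale_of_real: "cscale (complex_of_real r) x = r *\<^sub>R x"
    and cscale_add_right: "cscale c (x + y) = cscale c x + cscale c y"
    and cscale_add_left: "cscale (c + d) x = cscale c x + cscale d x"
    and cscale_cscale: "cscale c (cscale d x) = cscale (c * d) x"
    and cinner_add_left: "cinner (x + y) z = cinner x z + cinner y z"
    and cinner_cscale_left: "cinner (cscale c x) y = c * cinner x y"
    and cinner_commute: "cinner y x = cnj (cinner x y)"
    and norm_eq_cinner: "norm x = sqrt (Re (cinner x x))"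

class chilbert = complex_inner + complete_space

definition is_separable :: "'a::topological_space itself \<Rightarrow> bool" where
  "is_separable _ \<longleftrightarrow> (\<exists>D::'a set. countable D \<and> closure D = UNIV)"

definition clinear_op :: "('a::complex_inner \<Rightarrow> 'a) \<Rightarrow> bool" where
  "clinear_op T \<longleftrightarrow> (\<forall>x y. T (x + y) = T x + T y) \<and> (\<forall>c x. T (cscale c x) = cscale c (T x))"

definition bounded_op :: "('a::complex_inner \<Rightarrow> 'a) \<Rightarrow> bool" where
  "bounded_op T \<longleftrightarrow> clinear_op T \<and> (\<exists>K. \<forall>x. norm (T x) \<le> norm x * K)"

text \<open>The Hilbert-space adjoint (exists and is unique for bounded operators).\<close>
definition cadjoint :: "('a::complex_inner \<Rightarrow> 'a) \<Rightarrow> ('a \<Rightarrow> 'a)" where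
  "cadjoint T = (SOME S. \<forall>x y. cinner (T x) y = cinner x (S y))"

definition normal_op :: "('a::complex_inner \<Rightarrow> 'a) \<Rightarrow> bool" where
  "normal_op N \<longleftrightarrow> bounded_op N \<and> N \<circ> cadjoint N = cadjoint N \<circ> N"

definition unitary_op :: "('a::complex_inner \<Rightarrow> 'a) \<Rightarrow> bool" where
  "unitary_op U \<longleftrightarrow> bounded_op U \<and> cadjoint U \<circ> U = id \<and> U \<circ> cadjoint U = id"

definition wot_closed :: "('a::complex_inner \<Rightarrow> 'a) set \<Rightarrow> bool" where
  "wot_closed A \<longleftrightarrow>
     (\<forall>T. bounded_op T \<and>
          (\<forall>e>0. \<forall>F. finite F \<longrightarrow>
             (\<exists>S\<in>A. \<forall>(x, y)\<in>F. cmod (cinner (T x) y - cinner (S x) y) < e))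
        \<longrightarrow> T \<in> A)"

definition von_neumann_algebra :: "('a::complex_inner \<Rightarrow> 'a) set \<Rightarrow> bool" where
  "von_neumann_algebra A \<longleftrightarrow>
     (\<forall>T\<in>A. bounded_op T) \<and> id \<in> A \<and>
     (\<forall>S\<in>A. \<forall>T\<in>A. (\<lambda>x. S x + T x) \<in> A) \<and>
     (\<forall>S\<in>A. \<forall>T\<in>A. S \<circ> T \<in> A) \<and>
     (\<forall>c. \<forall>T\<in>A. (\<lambda>x. cscale c (T x)) \<in> A) \<and>
     (\<forall>T\<in>A. cadjoint T \<in> A) \<and>
     wot_closed A"

definition vN_generated :: "('a::complex_inner \<Rightarrow> 'a) \<Rightarrow> ('a \<Rightarrow> 'a) set" where
  "vN_generated N = \<Inter> {A. von_neumann_algebra A \<and> N \<in> A}"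

text \<open>x \<otimes> y is the operator f \<mapsto> \<langle>f, y\<rangle> x.\<close>
definition rank_one :: "'a::complex_inner \<Rightarrow> 'a \<Rightarrow> ('a \<Rightarrow> 'a)" where
  "rank_one x y = (\<lambda>f. cscale (cinner f y) x)"

definition conjugation :: "('a::complex_inner \<Rightarrow> 'a) \<Rightarrow> bool" where
  "conjugation C \<longleftrightarrow>
     (\<forall>x y. C (x + y) = C x + C y) \<and> (\<forall>c x. C (cscale c x) = cscale (cnj c) (C x)) \<and>
     (\<forall>x. norm (C x) = norm x) \<and> (\<forall>x. C (C x) = x)"

definition complex_symmetric :: "('a::complex_inner \<Rightarrow> 'a) \<Rightarrow> bool" where
  "complex_symmetric T \<longleftrightarrow> (\<exists>C. conjugation C \<and> T = C \<circ> cadjoint T \<circ> C)"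

end

theory Submission
  imports Defs
begin
lemma cscale_one[simp]: "cscale 1 x = x"
  using cscale_of_real[of 1 x] by simp

lemma cscale_zero_left[simp]: "cscale 0 x = 0"
  using cscale_of_real[of 0 x] by simp

lemma cscale_zero_right[simp]: "cscale c 0 = 0"
  using cscale_add_right[of c 0 0] by simp

lemma cscale_minus_right: "cscale c (- x) = - cscale c x"
  using cscale_add_right[of c x "-x"] by (metis add.right_inverse cscale_zero_right minus_unique)

lemma cscale_diff_right: "cscale c (x - y) = cscale c x - cscale c y"
  using cscale_add_right[of c x "-y"] cscale_minus_right[of c y] by simp

lemma cscale_minus_left: "cscale (- c) x = - cscale c x"
  using cscale_add_left[of c "-c" x] by (metis add.right_inverse cscale_zero_left minus_unique)

lemma cscale_diff_left: "cscale (c - d) x = cscale c x - cscale d x"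
  using cscale_add_left[of c "-d" x] cscale_minus_left[of d x] by simp

lemma cscale_sum_right: "cscale c (sum f A) = (\<Sum>i\<in>A. cscale c (f i))"
  by (induction A rule: infinite_finite_induct) (auto simp: cscale_add_right)

lemma cinner_add_right: "cinner x (y + z) = cinner x y + cinner x z"
  by (metis cinner_commute cinner_add_left complex_cnj_add)

lemma cinner_cscale_right: "cinner x (cscale c y) = cnj c * cinner x y"
  by (metis cinner_commute cinner_cscale_left complex_cnj_mult)

lemma cinner_zero_left[simp]: "cinner 0 x = 0"
  using cinner_add_left[of 0 0 x] by simp

lemma cinner_zero_right[simp]: "cinner x 0 = 0"
  using cinner_add_right[of x 0 0] by simp

lemma cinner_minus_left: "cinner (- x) y = - cinner x y"
  using cinner_add_left[of x "-x" y] by (metis add.right_inverse cinner_zero_left minus_unique)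

lemma cinner_minus_right: "cinner x (- y) = - cinner x y"
  using cinner_add_right[of x y "-y"] by (metis add.right_inverse cinner_zero_right minus_unique)

lemma cinner_diff_left: "cinner (x - y) z = cinner x z - cinner y z"
  using cinner_add_left[of x "-y" z] cinner_minus_left[of y z] by simp

lemma cinner_diff_right: "cinner x (y - z) = cinner x y - cinner x z"
  using cinner_add_right[of x y "-z"] cinner_minus_right[of x z] by simp

lemma cinner_sum_left: "cinner (sum f A) y = (\<Sum>i\<in>A. cinner (f i) y)"
  by (induction A rule: infinite_finite_induct) (auto simp: cinner_add_left)

lemma cinner_sum_right: "cinner y (sum f A) = (\<Sum>i\<in>A. cinner y (f i))"
  by (induction A rule: infinite_finite_induct) (auto simp: cinner_add_right)

lemma cinner_self_Re_nonneg: "Re (cinner x x) \<ge> 0"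
proof (rule ccontr)
  assume "\<not> ?thesis"
  then have "sqrt (Re (cinner x x)) < 0" by simp
  with norm_eq_cinner[of x] show False by (metis norm_ge_zero not_le)
qed

lemma cinner_self_real: "cinner x x = complex_of_real (Re (cinner x x))"
proof -
  have "Im (cinner x x) = 0" using cinner_commute[of x x]
    by (metis Im_complex_of_real Reals_cnj_iff complex_is_Real_iff)
  then show ?thesis by (simp add: complex_eq_iff)
qed

lemma norm_sq_cinner: "(norm x)^2 = Re (cinner x x)"
  using norm_eq_cinner[of x] cinner_self_Re_nonneg[of x] by simp

lemma cinner_self_norm: "cinner x x = complex_of_real ((norm x)^2)"
  by (metis cinner_self_real norm_sq_cinner)

lemma cinner_self_eq_0: "cinner x x = 0 \<longleftrightarrow> x = 0"
  by (metis cinner_self_norm cinner_zero_left norm_eq_zero of_real_eq_0_iff zero_less_power zero_less_norm_iff)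

lemma cinner_ext_left: "(\<And>y. cinner x y = cinner z y) \<Longrightarrow> x = z"
  by (metis cinner_diff_left cinner_self_eq_0 eq_iff_diff_eq_0)

lemma cinner_ext_right: "(\<And>y. cinner y x = cinner y z) \<Longrightarrow> x = z"
  by (metis cinner_diff_right cinner_self_eq_0 eq_iff_diff_eq_0)

lemma norm_cscale: "norm (cscale c x) = cmod c * norm x"
proof -
  have "cinner (cscale c x) (cscale c x) = (c * cnj c) * cinner x x"
    by (simp add: cinner_cscale_left cinner_cscale_right mult.assoc mult.left_commute)
  also have "\<dots> = complex_of_real ((cmod c * norm x)^2)"
    by (simp add: complex_mult_cnj cinner_self_norm power_mult_distrib cmod_power2)
  finally have "Re (cinner (cscale c x) (cscale c x)) = (cmod c * norm x)^2"
    by (metis Re_complex_of_real)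
  then have "(norm (cscale c x))^2 = (cmod c * norm x)^2"
    by (simp add: norm_sq_cinner)
  then show ?thesis by (simp add: power2_eq_iff_nonneg)
qed

lemma norm_add_sq: "(norm (x + y))^2 = (norm x)^2 + (norm y)^2 + 2 * Re (cinner x y)"
proof -
  have "cinner (x+y) (x+y) = cinner x x + cinner y y + (cinner x y + cnj (cinner x y))"
    by (simp add: cinner_add_left cinner_add_right cinner_commute[of x y])
  then show ?thesis by (simp add: norm_sq_cinner)
qed

lemma norm_diff_sq: "(norm (x - y))^2 = (norm x)^2 + (norm y)^2 - 2 * Re (cinner x y)"
  using norm_add_sq[of x "-y"] by (simp add: cinner_minus_right)

lemma cauchy_schwarz: "cmod (cinner x y) \<le> norm x * norm y"
proof (cases "y = 0")
  case True then show ?thesis by simp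
next
  case False
  define t where "t = cinner x y / complex_of_real ((norm y)^2)"
  have ny: "norm y > 0" using False by simp
  have "0 \<le> Re (cinner (x - cscale t y) (x - cscale t y))" by (rule cinner_self_Re_nonneg)
  also have "cinner (x - cscale t y) (x - cscale t y)
      = cinner x x - cnj t * cinner x y - t * cinner y x + t * cnj t * cinner y y"
    by (simp add: cinner_diff_left cinner_diff_right cinner_cscale_left cinner_cscale_right algebra_simps)
  also have "\<dots> = cinner x x - cinner x y * cnj (cinner x y) / complex_of_real ((norm y)^2)"
    using ny by (simp add: t_def cinner_commute[of y x] cinner_self_norm field_simps)
  finally have h: "0 \<le> Re (cinner x x - cinner x y * cnj (cinner x y) / complex_of_real ((norm y)^2))" .
  have "cinner x x - cinner x y * cnj (cinner x y) / complex_of_real ((norm y)^2)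
     = complex_of_real ((norm x)^2 - (cmod (cinner x y))^2 / (norm y)^2)"
    by (simp only: cinner_self_norm complex_mult_cnj cmod_power2[symmetric] of_real_diff of_real_divide)
  with h have "0 \<le> (norm x)^2 - (cmod (cinner x y))^2 / (norm y)^2" by (metis Re_complex_of_real)
  then have "(cmod (cinner x y))^2 / (norm y)^2 \<le> (norm x)^2" by simp
  then have "(cmod (cinner x y))^2 \<le> (norm x * norm y)^2"
    using ny by (simp add: divide_le_eq power_mult_distrib)
  then show ?thesis by (simp add: power2_le_iff_abs_le)
qed

lemma scaleR_cscale: "r *\<^sub>R x = cscale (complex_of_real r) x"
  by (simp add: cscale_of_real)

lemma bop_add: "bounded_op T \<Longrightarrow> T (x + y) = T x + T y"
  by (simp add: bounded_op_def clinear_op_def)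

lemma bop_cscale: "bounded_op T \<Longrightarrow> T (cscale c x) = cscale c (T x)"
  by (simp add: bounded_op_def clinear_op_def)

lemma bop_bound: "bounded_op T \<Longrightarrow> \<exists>K. \<forall>x. norm (T x) \<le> norm x * K"
  by (simp add: bounded_op_def)

lemma bop_linear: assumes "bounded_op T" shows "bounded_linear T"
proof -
  obtain K where K: "\<forall>x. norm (T x) \<le> norm x * K" using bop_bound[OF assms] by blast
  show ?thesis
    by (rule bounded_linear_intro[where K=K])
       (auto simp: bop_add[OF assms] scaleR_cscale bop_cscale[OF assms] K)
qed

lemma bop_zero: "bounded_op T \<Longrightarrow> T 0 = 0"
  using bop_linear linear_0 bounded_linear.linear by blast

lemma bop_minus: "bounded_op T \<Longrightarrow> T (- x) = - T x"
  using bop_linear linear_neg bounded_linear.linear by blast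

lemma bop_diff: "bounded_op T \<Longrightarrow> T (x - y) = T x - T y"
  using bop_linear linear_diff bounded_linear.linear by blast

lemma bop_sum: "bounded_op T \<Longrightarrow> T (sum f A) = (\<Sum>i\<in>A. T (f i))"
  using bop_linear linear_sum bounded_linear.linear by blast

lemma bop_continuous: "bounded_op T \<Longrightarrow> continuous_on S T"
  using bop_linear linear_continuous_on by blast

lemma bop_id: "bounded_op id"
  unfolding bounded_op_def clinear_op_def by (auto intro!: exI[of _ 1])

lemma bop_zero_op: "bounded_op (\<lambda>x. 0)"
  unfolding bounded_op_def clinear_op_def by (auto intro!: exI[of _ 0])

lemma bop_comp: assumes "bounded_op S" "bounded_op T" shows "bounded_op (S \<circ> T)"
proof -
  obtain K where K: "\<forall>x. norm (S x) \<le> norm x * K" using bop_bound[OF assms(1)] by blast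
  obtain L where L: "\<forall>x. norm (T x) \<le> norm x * L" using bop_bound[OF assms(2)] by blast
  have "norm (S (T x)) \<le> norm x * (\<bar>L\<bar> * \<bar>K\<bar>)" for x
  proof -
    have "norm (S (T x)) \<le> norm (T x) * K" using K by blast
    also have "\<dots> \<le> norm (T x) * \<bar>K\<bar>" by (simp add: mult_left_mono)
    also have "\<dots> \<le> (norm x * \<bar>L\<bar>) * \<bar>K\<bar>"
      using L by (meson abs_ge_self abs_ge_zero mult_left_mono mult_right_mono norm_ge_zero order_trans)
    finally show ?thesis by (simp add: mult.assoc)
  qed
  then show ?thesis using assms
    unfolding bounded_op_def clinear_op_def by auto
qed

lemma bop_plus: assumes "bounded_op S" "bounded_op T" shows "bounded_op (\<lambda>x. S x + T x)"
proof -
  obtain K where K: "\<forall>x. norm (S x) \<le> norm x * K" using bop_bound[OF assms(1)] by blast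
  obtain L where L: "\<forall>x. norm (T x) \<le> norm x * L" using bop_bound[OF assms(2)] by blast
  have bd: "\<forall>x. norm (S x + T x) \<le> norm x * (K + L)"
    using norm_triangle_ineq K L by (smt (verit, best) distrib_left)
  have lin: "clinear_op (\<lambda>x. S x + T x)" using assms
    unfolding bounded_op_def clinear_op_def by (auto simp: cscale_add_right algebra_simps)
  show ?thesis unfolding bounded_op_def using lin bd by blast
qed

lemma bop_scale: assumes "bounded_op T" shows "bounded_op (\<lambda>x. cscale c (T x))"
proof -
  obtain K where K: "\<forall>x. norm (T x) \<le> norm x * K" using bop_bound[OF assms(1)] by blast
  have bd: "\<forall>x. norm (cscale c (T x)) \<le> norm x * (cmod c * K)"
  proof
    fix x
    have "cmod c * norm (T x) \<le> cmod c * (norm x * K)" by (rule mult_left_mono) (use K in auto)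
    then show "norm (cscale c (T x)) \<le> norm x * (cmod c * K)" by (simp add: norm_cscale algebra_simps)
  qed
  have lin: "clinear_op (\<lambda>x. cscale c (T x))" using assms
    unfolding bounded_op_def clinear_op_def by (auto simp: cscale_add_right cscale_cscale mult.commute)
  show ?thesis unfolding bounded_op_def using lin bd by blast
qed

lemma bop_minus_op: assumes "bounded_op S" "bounded_op T" shows "bounded_op (\<lambda>x. S x - T x)"
  using bop_plus[OF assms(1) bop_scale[OF assms(2), of "-1"]]
  by (simp add: cscale_minus_left)

section \<open>Projection theorem\<close>

definition csubspace :: "'a::complex_inner set \<Rightarrow> bool" where
  "csubspace M \<longleftrightarrow> 0 \<in> M \<and> (\<forall>x\<in>M. \<forall>y\<in>M. x + y \<in> M) \<and> (\<forall>c. \<forall>x\<in>M. cscale c x \<in> M)"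

lemma parallelogram: fixes u w :: "'a::complex_inner" shows "(norm (u - w))^2 + (norm (u + w))^2 = 2 * (norm u)^2 + 2 * (norm w)^2"
  using norm_add_sq[of u w] norm_diff_sq[of u w] by simp

lemma proj_min:
  fixes x :: "'a::chilbert"
  assumes "csubspace M" "closed M"
  shows "\<exists>p\<in>M. \<forall>m\<in>M. norm (x - p) \<le> norm (x - m)"
proof -
  define S where "S = (\<lambda>m. norm (x - m)) ` M"
  define d where "d = Inf S"
  have S0: "S \<noteq> {}" using assms(1) by (auto simp: S_def csubspace_def)
  have Sb: "bdd_below S" by (auto simp: S_def intro!: bdd_belowI[of _ 0])
  have dle: "d \<le> norm (x - m)" if "m \<in> M" for m
    unfolding d_def using that Sb by (auto simp: S_def intro!: cInf_lower)
  have d0: "0 \<le> d" unfolding d_def using S0 by (auto simp: S_def intro!: cInf_greatest)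
  have "\<exists>m\<in>M. norm (x - m) < d + inverse (real (Suc k))" for k
  proof -
    have "d < d + inverse (real (Suc k))" by simp
    then obtain s where "s \<in> S" "s < d + inverse (real (Suc k))"
      using cInf_lessD[OF S0] unfolding d_def by blast
    then show ?thesis by (auto simp: S_def)
  qed
  then obtain m where mM: "\<And>k. m k \<in> M" and mb: "\<And>k. norm (x - m k) < d + inverse (real (Suc k))"
    by metis
  have half: "cscale ((1/2::complex)) (a + b) \<in> M" if "a \<in> M" "b \<in> M" for a b
    using assms(1) that unfolding csubspace_def by blast
  have key: "(norm (a - b))^2 \<le> 8 * d * e + 4 * e^2"
    if "a \<in> M" "b \<in> M" "norm (x - a) \<le> d + e" "norm (x - b) \<le> d + e" "e \<ge> 0" for a b e
  proof -
    have e1: "x - a - (x - b) = b - a" by simp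
    have p: "(norm (b - a))^2 + (norm ((x - a) + (x - b)))^2
             = 2 * (norm (x - a))^2 + 2 * (norm (x - b))^2"
      using parallelogram[of "x - a" "x - b"] unfolding e1 .
    have h: "cscale (1/2::complex) (a + b) + cscale (1/2::complex) (a + b) = a + b"
      by (subst cscale_add_left[symmetric]) simp
    have "(x - a) + (x - b) = 2 *\<^sub>R (x - cscale ((1/2::complex)) (a + b))"
      unfolding scaleR_2 using h by (simp add: algebra_simps)
    then have "norm ((x - a) + (x - b)) = 2 * norm (x - cscale ((1/2::complex)) (a + b))"
      by simp
    moreover have "d \<le> norm (x - cscale ((1/2::complex)) (a + b))"
      using dle half that by blast
    ultimately have "2 * d \<le> norm ((x - a) + (x - b))" by simp
    then have "(2 * d)^2 \<le> (norm ((x - a) + (x - b)))^2"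
      by (rule power_mono) (use d0 in auto)
    then have q: "4 * d^2 \<le> (norm ((x - a) + (x - b)))^2" by (simp add: power_mult_distrib)
    have "(norm (x - a))^2 \<le> (d + e)^2" using that d0 by (simp add: power_mono)
    moreover have "(norm (x - b))^2 \<le> (d + e)^2" using that d0 by (simp add: power_mono)
    ultimately have "(norm (b - a))^2 \<le> 4 * (d + e)^2 - 4 * d^2" using p q by linarith
    then show ?thesis by (simp add: norm_minus_commute power2_eq_square algebra_simps)
  qed
  have "Cauchy m"
  proof (rule CauchyI)
    fix e :: real assume e: "0 < e"
    define t where "t = min 1 (e^2 / (8 * d + 4 + 1))"
    have t0: "0 < t" using e d0 by (simp add: t_def)
    obtain K where K: "inverse (real (Suc K)) < t" using reals_Archimedean[OF t0] by blast
    show "\<exists>M. \<forall>k\<ge>M. \<forall>l\<ge>M. norm (m k - m l) < e"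
    proof (intro exI allI impI)
      fix k l assume kl: "K \<le> k" "K \<le> l"
      have ik: "inverse (real (Suc k)) \<le> inverse (real (Suc K))" using kl by (simp add: le_imp_inverse_le)
      have il: "inverse (real (Suc l)) \<le> inverse (real (Suc K))" using kl by (simp add: le_imp_inverse_le)
      let ?e = "inverse (real (Suc K))"
      have "(norm (m k - m l))^2 \<le> 8 * d * ?e + 4 * ?e^2"
        proof (rule key[of "m k" "m l" ?e]) show "norm (x - m k) \<le> d + ?e" using mb[of k] ik by linarith show "norm (x - m l) \<le> d + ?e" using mb[of l] il by linarith qed (auto simp: mM)
      also have "\<dots> \<le> (8 * d + 4) * ?e"
      proof -
        have "?e \<le> 1" by (simp add: inverse_le_1_iff)
        then have "?e^2 \<le> ?e" by (simp add: power2_eq_square mult_le_cancel_right1)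
        then show ?thesis by (simp add: algebra_simps)
      qed
      also have "\<dots> < (8 * d + 4 + 1) * t"
      proof -
        have "(8 * d + 4) * ?e \<le> (8 * d + 4) * t" using K d0 by (intro mult_left_mono) auto
        also have "\<dots> < (8 * d + 4 + 1) * t" using t0 by simp
        finally show ?thesis .
      qed
      also have "\<dots> \<le> e^2"
      proof -
        have "t \<le> e^2 / (8 * d + 4 + 1)" by (simp add: t_def)
        then show ?thesis using d0 by (simp add: field_simps)
      qed
      finally have "(norm (m k - m l))^2 < e^2" .
      then show "norm (m k - m l) < e" using e by (simp add: power_less_imp_less_base)
    qed
  qed
  then obtain p where p: "m \<longlonglongrightarrow> p" using Cauchy_convergent convergent_def by blast
  have pM: "p \<in> M" using closed_sequentially[OF assms(2) mM p] .
  have "(\<lambda>k. norm (x - m k)) \<longlonglongrightarrow> norm (x - p)" by (intro tendsto_intros p)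
  moreover have "(\<lambda>k. d + inverse (real (Suc k))) \<longlonglongrightarrow> d"
    using LIMSEQ_inverse_real_of_nat by (metis add.right_neutral tendsto_add_const_iff)
  ultimately have "norm (x - p) \<le> d"
    using mb by (intro LIMSEQ_le[of "\<lambda>k. norm (x - m k)" _ "\<lambda>k. d + inverse (real (Suc k))"]) (auto intro: less_imp_le)
  then show ?thesis using pM dle by (meson order_trans)
qed

lemma proj_exists:
  fixes x :: "'a::chilbert"
  assumes "csubspace M" "closed M"
  shows "\<exists>p\<in>M. \<forall>m\<in>M. cinner (x - p) m = 0"
proof -
  obtain p where pM: "p \<in> M" and pmin: "\<And>m. m \<in> M \<Longrightarrow> norm (x - p) \<le> norm (x - m)"
    using proj_min[OF assms] by blast
  have "cinner (x - p) m = 0" if mM: "m \<in> M" for m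
  proof (rule ccontr)
    assume c0: "cinner (x - p) m \<noteq> 0"
    define c where "c = cinner (x - p) m"
    define z where "z = x - p"
    define s where "s = 1 / ((norm m)^2 + 1)"
    have s0: "s > 0" unfolding s_def by (intro divide_pos_pos add_nonneg_pos) auto
    have pp: "(norm m)^2 + 1 > 0" by (intro add_nonneg_pos) auto
    have sm: "s * (norm m)^2 < 1" unfolding s_def using pp by (simp add: divide_less_eq)
    have "p + cscale (complex_of_real s * c) m \<in> M"
      using assms(1) pM mM unfolding csubspace_def by blast
    then have "norm z \<le> norm (z - cscale (complex_of_real s * c) m)"
      using pmin unfolding z_def by (metis diff_diff_eq)
    then have "(norm z)^2 \<le> (norm (z - cscale (complex_of_real s * c) m))^2"
      by (simp add: power_mono)
    also have "\<dots> = (norm z)^2 + (s * cmod c * norm m)^2 - 2 * Re (cinner z (cscale (complex_of_real s * c) m))"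
      by (simp add: norm_diff_sq norm_cscale norm_mult s0 less_imp_le)
    also have "Re (cinner z (cscale (complex_of_real s * c) m)) = s * (cmod c)^2"
    proof -
      have "cinner z (cscale (complex_of_real s * c) m) = complex_of_real s * (c * cnj c)"
        by (simp add: cinner_cscale_right c_def z_def)
      also have "\<dots> = complex_of_real (s * (cmod c)^2)"
        by (simp only: complex_norm_square[symmetric] of_real_mult)
      finally show ?thesis by (metis Re_complex_of_real)
    qed
    finally have "0 \<le> s^2 * (cmod c)^2 * (norm m)^2 - 2 * s * (cmod c)^2"
      by (simp add: power_mult_distrib)
    then have "0 \<le> (s * (cmod c)^2) * (s * (norm m)^2 - 2)"
      by (simp add: algebra_simps power2_eq_square)
    moreover have "s * (cmod c)^2 > 0" using s0 c0 by (simp add: c_def)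
    ultimately have "0 \<le> s * (norm m)^2 - 2" by (simp add: zero_le_mult_iff)
    with sm show False by simp
  qed
  with pM show ?thesis by blast
qed

lemma csubspace_closed_kernel:
  fixes f :: "'a::chilbert \<Rightarrow> complex"
  assumes add: "\<And>x y. f (x + y) = f x + f y" and sc: "\<And>c x. f (cscale c x) = c * f x"
    and bd: "\<And>x. cmod (f x) \<le> norm x * K"
  shows "csubspace {x. f x = 0}" "closed {x. f x = 0}" "bounded_linear f"
proof -
  show bl: "bounded_linear f"
    by (rule bounded_linear_intro[where K=K]) (auto simp: add bd scaleR_cscale sc scaleR_conv_of_real)
  have f0: "f 0 = 0" using add[of 0 0] by simp
  show "csubspace {x. f x = 0}" unfolding csubspace_def using f0 add sc by auto
  have "continuous_on UNIV f" using bl linear_continuous_on by blast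
  then show "closed {x. f x = 0}" using closed_Collect_eq[of f "\<lambda>_. 0"] by auto
qed

lemma riesz:
  fixes f :: "'a::chilbert \<Rightarrow> complex"
  assumes add: "\<And>x y. f (x + y) = f x + f y" and sc: "\<And>c x. f (cscale c x) = c * f x"
    and bd: "\<And>x. cmod (f x) \<le> norm x * K"
  shows "\<exists>y. \<forall>x. f x = cinner x y"
proof (cases "\<forall>x. f x = 0")
  case True then show ?thesis by (intro exI[of _ 0]) simp
next
  case False
  then obtain x0 where fx0: "f x0 \<noteq> 0" by blast
  note ker = csubspace_closed_kernel[OF add sc bd]
  obtain p where pM: "f p = 0" and po: "\<And>m. f m = 0 \<Longrightarrow> cinner (x0 - p) m = 0"
    using proj_exists[OF ker(1) ker(2), of x0] by auto
  define z where "z = x0 - p"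
  have fd: "f (a - b) = f a - f b" for a b
    using add[of "a - b" b] by simp
  have fz: "f z = f x0" using pM by (simp add: z_def fd)
  have z0: "z \<noteq> 0" using fz fx0 by (metis add add_cancel_right_left)
  have nz: "cinner z z \<noteq> 0" using z0 cinner_self_eq_0 by blast
  define y where "y = cscale (cnj (f z) / cnj (cinner z z)) z"
  have "f x = cinner x y" for x
  proof -
    define u where "u = cscale (f x) z - cscale (f z) x"
    have "f u = 0" by (simp add: u_def fd sc)
    then have "cinner z u = 0"
      using po[of u] unfolding z_def[symmetric] by (metis cinner_commute complex_cnj_zero)
    then have "cnj (f x) * cinner z z - cnj (f z) * cinner z x = 0"
      by (simp add: u_def cinner_diff_right cinner_cscale_right)
    then have "cnj (f x) = cnj (f z) * cinner z x / cinner z z" using nz by (simp add: field_simps)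
    then have "f x = f z * cinner x z / cnj (cinner z z)"
      by (metis cinner_commute complex_cnj_cnj complex_cnj_divide complex_cnj_mult)
    also have "\<dots> = cinner x y" by (simp add: y_def cinner_cscale_right cinner_commute[of z z, symmetric])
    finally show ?thesis .
  qed
  then show ?thesis by blast
qed

lemma adj_exists_op:
  fixes T :: "'a::chilbert \<Rightarrow> 'a"
  assumes "bounded_op T"
  shows "\<exists>S. \<forall>x y. cinner (T x) y = cinner x (S y)"
proof -
  obtain K where K: "\<forall>x. norm (T x) \<le> norm x * K" using bop_bound[OF assms] by blast
  have "\<exists>w. \<forall>x. cinner (T x) y = cinner x w" for y
  proof (rule riesz[where K="K * norm y"])
    show "cinner (T (x + z)) y = cinner (T x) y + cinner (T z) y" for x z
      by (simp add: bop_add[OF assms] cinner_add_left)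
    show "cinner (T (cscale c x)) y = c * cinner (T x) y" for c x
      by (simp add: bop_cscale[OF assms] cinner_cscale_left)
    show "cmod (cinner (T x) y) \<le> norm x * (K * norm y)" for x
    proof -
      have "cmod (cinner (T x) y) \<le> norm (T x) * norm y" by (rule cauchy_schwarz)
      also have "\<dots> \<le> norm x * K * norm y" using K by (simp add: mult_right_mono)
      finally show ?thesis by (simp add: mult.assoc)
    qed
  qed
  then show ?thesis by metis
qed

lemma adj_eq:
  fixes T :: "'a::chilbert \<Rightarrow> 'a"
  assumes "bounded_op T"
  shows "cinner (T x) y = cinner x (cadjoint T y)"
proof -
  have "\<forall>x y. cinner (T x) y = cinner x (cadjoint T y)"
    unfolding cadjoint_def using adj_exists_op[OF assms] by (rule someI_ex)
  then show ?thesis by blast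
qed

lemma adj_unique:
  assumes "\<And>x y. cinner (T x) y = cinner x (S y)"
  shows "cadjoint T = S"
proof -
  have ex: "\<exists>S. \<forall>x y. cinner (T x) y = cinner x (S y)" using assms by blast
  have h: "\<forall>x y. cinner (T x) y = cinner x (cadjoint T y)"
    unfolding cadjoint_def using ex by (rule someI_ex)
  show ?thesis
  proof
    fix y show "cadjoint T y = S y"
      by (rule cinner_ext_right) (metis h assms)
  qed
qed

lemma adj_eq2:
  fixes T :: "'a::chilbert \<Rightarrow> 'a"
  assumes "bounded_op T"
  shows "cinner (cadjoint T x) y = cinner x (T y)"
  by (metis adj_eq[OF assms] cinner_commute)

lemma adj_adj:
  fixes T :: "'a::chilbert \<Rightarrow> 'a"
  assumes "bounded_op T"
  shows "cadjoint (cadjoint T) = T"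
  by (rule adj_unique) (rule adj_eq2[OF assms])

lemma adj_bounded:
  fixes T :: "'a::chilbert \<Rightarrow> 'a"
  assumes "bounded_op T"
  shows "bounded_op (cadjoint T)"
proof -
  obtain K where K: "\<forall>x. norm (T x) \<le> norm x * K" using bop_bound[OF assms] by blast
  have add: "cadjoint T (x + y) = cadjoint T x + cadjoint T y" for x y
    by (rule cinner_ext_right) (simp add: adj_eq[OF assms, symmetric] cinner_add_right)
  have sc: "cadjoint T (cscale c x) = cscale c (cadjoint T x)" for c x
    by (rule cinner_ext_right) (simp add: adj_eq[OF assms, symmetric] cinner_cscale_right)
  have bd: "norm (cadjoint T y) \<le> norm y * K" for y
  proof (cases "cadjoint T y = 0")
    case True then show ?thesis using K by (metis norm_ge_zero norm_zero order_trans mult_nonneg_nonneg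
          le_cases mult_nonpos_nonneg norm_le_zero_iff)
  next
    case False
    let ?w = "cadjoint T y"
    have "(norm ?w)^2 = Re (cinner ?w ?w)" by (rule norm_sq_cinner)
    also have "cinner ?w ?w = cinner (T ?w) y" by (simp add: adj_eq[OF assms])
    also have "Re \<dots> \<le> cmod (cinner (T ?w) y)" by (rule complex_Re_le_cmod)
    also have "\<dots> \<le> norm (T ?w) * norm y" by (rule cauchy_schwarz)
    also have "\<dots> \<le> norm ?w * K * norm y" using K by (simp add: mult_right_mono)
    finally have "norm ?w * norm ?w \<le> norm ?w * (norm y * K)" by (simp add: power2_eq_square algebra_simps)
    then show ?thesis using False by simp
  qed
  show ?thesis unfolding bounded_op_def clinear_op_def using add sc bd by blast
qed

lemma adj_comp:
  fixes S T :: "'a::chilbert \<Rightarrow> 'a"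
  assumes "bounded_op S" "bounded_op T"
  shows "cadjoint (S \<circ> T) = cadjoint T \<circ> cadjoint S"
  by (rule adj_unique) (simp add: adj_eq[OF assms(1)] adj_eq[OF assms(2)])

lemma adj_plus:
  fixes S T :: "'a::chilbert \<Rightarrow> 'a"
  assumes "bounded_op S" "bounded_op T"
  shows "cadjoint (\<lambda>x. S x + T x) = (\<lambda>x. cadjoint S x + cadjoint T x)"
  by (rule adj_unique) (simp add: adj_eq[OF assms(1)] adj_eq[OF assms(2)] cinner_add_left cinner_add_right)

lemma adj_minus:
  fixes S T :: "'a::chilbert \<Rightarrow> 'a"
  assumes "bounded_op S" "bounded_op T"
  shows "cadjoint (\<lambda>x. S x - T x) = (\<lambda>x. cadjoint S x - cadjoint T x)"
  by (rule adj_unique) (simp add: adj_eq[OF assms(1)] adj_eq[OF assms(2)] cinner_diff_left cinner_diff_right)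

lemma adj_scale:
  fixes T :: "'a::chilbert \<Rightarrow> 'a"
  assumes "bounded_op T"
  shows "cadjoint (\<lambda>x. cscale c (T x)) = (\<lambda>x. cscale (cnj c) (cadjoint T x))"
  by (rule adj_unique) (simp add: adj_eq[OF assms(1)] cinner_cscale_left cinner_cscale_right)

lemma adj_id: "cadjoint (id :: 'a::complex_inner \<Rightarrow> 'a) = id"
  by (rule adj_unique) simp

lemma adj_zero: "cadjoint ((\<lambda>x. 0) :: 'a::complex_inner \<Rightarrow> 'a) = (\<lambda>x. 0)"
  by (rule adj_unique) simp

definition comm :: "('a::complex_inner \<Rightarrow> 'a) set \<Rightarrow> ('a \<Rightarrow> 'a) set" where
  "comm X = {S. bounded_op S \<and> (\<forall>R\<in>X. S \<circ> R = R \<circ> S)}"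

definition starclosed :: "('a::complex_inner \<Rightarrow> 'a) set \<Rightarrow> bool" where
  "starclosed X \<longleftrightarrow> (\<forall>R\<in>X. cadjoint R \<in> X)"

lemma comm_star:
  fixes X :: "('a::chilbert \<Rightarrow> 'a) set"
  assumes bX: "\<forall>R\<in>X. bounded_op R" and sX: "starclosed X"
  shows "starclosed (comm X)"
  unfolding starclosed_def
proof
  fix S assume S: "S \<in> comm X"
  then have bS: "bounded_op S" by (simp add: comm_def)
  have "cadjoint S \<circ> R = R \<circ> cadjoint S" if R: "R \<in> X" for R
  proof -
    have bR: "bounded_op R" using bX R by blast
    have R': "cadjoint R \<in> X" using sX R by (simp add: starclosed_def)
    then have "S \<circ> cadjoint R = cadjoint R \<circ> S" using S by (simp add: comm_def)
    then have "cadjoint (S \<circ> cadjoint R) = cadjoint (cadjoint R \<circ> S)" by simp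
    then show ?thesis
      by (simp add: adj_comp bS adj_bounded bR adj_adj)
  qed
  then show "cadjoint S \<in> comm X" by (simp add: comm_def adj_bounded bS)
qed

lemma comm_bounded: "S \<in> comm X \<Longrightarrow> bounded_op S"
  by (simp add: comm_def)

lemma comm_commute: "S \<in> comm X \<Longrightarrow> R \<in> X \<Longrightarrow> S (R x) = R (S x)"
  by (simp add: comm_def fun_eq_iff)

lemma comm_id: "id \<in> comm X"
  by (simp add: comm_def bop_id)

lemma comm_zero: "(\<lambda>x. 0) \<in> comm X" if "\<forall>R\<in>X. bounded_op R"
  using that by (auto simp: comm_def bop_zero_op fun_eq_iff bop_zero)

lemma comm_plus:
  assumes "\<forall>R\<in>X. bounded_op R" "S \<in> comm X" "T \<in> comm X"
  shows "(\<lambda>x. S x + T x) \<in> comm X"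
  using assms by (auto simp: comm_def bop_plus fun_eq_iff bop_add)

lemma comm_minus:
  assumes "\<forall>R\<in>X. bounded_op R" "S \<in> comm X" "T \<in> comm X"
  shows "(\<lambda>x. S x - T x) \<in> comm X"
  using assms by (auto simp: comm_def bop_minus_op fun_eq_iff bop_diff)

lemma comm_comp:
  assumes "S \<in> comm X" "T \<in> comm X"
  shows "S \<circ> T \<in> comm X"
  using assms by (auto simp: comm_def bop_comp fun_eq_iff)

lemma comm_scale:
  assumes "\<forall>R\<in>X. bounded_op R" "T \<in> comm X"
  shows "(\<lambda>x. cscale c (T x)) \<in> comm X"
  using assms by (auto simp: comm_def bop_scale fun_eq_iff bop_cscale)

lemma comm_wot:
  fixes X :: "('a::chilbert \<Rightarrow> 'a) set"
  assumes bX: "\<forall>R\<in>X. bounded_op R"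
  shows "wot_closed (comm X)"
  unfolding wot_closed_def
proof (intro allI impI)
  fix T assume h: "bounded_op T \<and> (\<forall>e>0. \<forall>F. finite F \<longrightarrow>
             (\<exists>S\<in>comm X. \<forall>(x, y)\<in>F. cmod (cinner (T x) y - cinner (S x) y) < e))"
  have "T (R x) = R (T x)" if R: "R \<in> X" for R x
  proof (rule cinner_ext_left)
    fix y
    have bR: "bounded_op R" using bX R by blast
    have "cmod (cinner (T (R x)) y - cinner (T x) (cadjoint R y)) < e" if e: "e > 0" for e
    proof -
      obtain S where S: "S \<in> comm X"
        and F: "\<forall>(a, b)\<in>{(R x, y), (x, cadjoint R y)}. cmod (cinner (T a) b - cinner (S a) b) < e / 2"
        using h[THEN conjunct2, rule_format, of "e/2" "{(R x, y), (x, cadjoint R y)}"] e by auto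
      have 1: "cmod (cinner (T (R x)) y - cinner (S (R x)) y) < e / 2" using F by auto
      have 2: "cmod (cinner (T x) (cadjoint R y) - cinner (S x) (cadjoint R y)) < e / 2" using F by auto
      have eq: "cinner (S (R x)) y = cinner (S x) (cadjoint R y)"
        by (simp add: comm_commute[OF S R] adj_eq[OF bR])
      have "cinner (T (R x)) y - cinner (T x) (cadjoint R y) =
            (cinner (T (R x)) y - cinner (S (R x)) y) - (cinner (T x) (cadjoint R y) - cinner (S x) (cadjoint R y))"
        using eq by simp
      then have "cmod (cinner (T (R x)) y - cinner (T x) (cadjoint R y)) \<le>
          cmod (cinner (T (R x)) y - cinner (S (R x)) y) + cmod (cinner (T x) (cadjoint R y) - cinner (S x) (cadjoint R y))"
        using norm_triangle_ineq4[of "cinner (T (R x)) y - cinner (S (R x)) y" "cinner (T x) (cadjoint R y) - cinner (S x) (cadjoint R y)"]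
        by simp
      then show ?thesis using 1 2 by simp
    qed
    then have "cinner (T (R x)) y - cinner (T x) (cadjoint R y) = 0"
      by (metis less_irrefl zero_less_norm_iff)
    then show "cinner (T (R x)) y = cinner (R (T x)) y" using adj_eq[OF bR] by simp
  qed
  then show "T \<in> comm X" using h by (auto simp: comm_def fun_eq_iff)
qed

lemma comm_vN:
  fixes X :: "('a::chilbert \<Rightarrow> 'a) set"
  assumes bX: "\<forall>R\<in>X. bounded_op R" and sX: "starclosed X"
  shows "von_neumann_algebra (comm X)"
  unfolding von_neumann_algebra_def
proof (intro conjI ballI allI)
  show "bounded_op T" if "T \<in> comm X" for T using that by (rule comm_bounded)
  show "id \<in> comm X" by (rule comm_id)
  show "(\<lambda>x. S x + T x) \<in> comm X" if "S \<in> comm X" "T \<in> comm X" for S T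
    using comm_plus[OF bX that] .
  show "S \<circ> T \<in> comm X" if "S \<in> comm X" "T \<in> comm X" for S T
    using comm_comp[OF that] .
  show "(\<lambda>x. cscale c (T x)) \<in> comm X" if "T \<in> comm X" for c T
    using comm_scale[OF bX that] .
  show "cadjoint T \<in> comm X" if "T \<in> comm X" for T
    using comm_star[OF bX sX] that by (simp add: starclosed_def)
  show "wot_closed (comm X)" by (rule comm_wot[OF bX])
qed

lemma comm_bX: "\<forall>R\<in>comm X. bounded_op R"
  by (simp add: comm_def)

lemma in_vN_generated_bicomm:
  fixes N U :: "'a::chilbert \<Rightarrow> 'a"
  assumes N: "normal_op N" and U: "U \<in> vN_generated N"
  shows "U \<in> comm (comm {N, cadjoint N})"
proof -
  have bN: "bounded_op N" using N by (simp add: normal_op_def)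
  let ?X = "{N, cadjoint N}"
  have bX: "\<forall>R\<in>?X. bounded_op R" using bN adj_bounded by auto
  have sX: "starclosed ?X" by (simp add: starclosed_def adj_adj[OF bN])
  have vN: "von_neumann_algebra (comm (comm ?X))"
    by (rule comm_vN[OF comm_bX comm_star[OF bX sX]])
  have "N \<in> comm (comm ?X)" using bN by (auto simp: comm_def)
  then show ?thesis using U vN unfolding vN_generated_def by blast
qed

lemma normal_in_comm:
  fixes N :: "'a::chilbert \<Rightarrow> 'a"
  assumes N: "normal_op N"
  shows "N \<in> comm {N, cadjoint N}" "cadjoint N \<in> comm {N, cadjoint N}"
proof -
  have bN: "bounded_op N" using N by (simp add: normal_op_def)
  have nn: "N \<circ> cadjoint N = cadjoint N \<circ> N" using N by (simp add: normal_op_def)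
  show "N \<in> comm {N, cadjoint N}" using bN nn by (auto simp: comm_def)
  show "cadjoint N \<in> comm {N, cadjoint N}" using bN nn adj_bounded by (auto simp: comm_def)
qed

lemma cscale_continuous: "continuous_on S (cscale c :: 'a::chilbert \<Rightarrow> 'a)"
proof -
  have "bounded_op (\<lambda>x::'a. cscale c (id x))" by (rule bop_scale[OF bop_id])
  moreover have "(\<lambda>x::'a. cscale c (id x)) = cscale c" by (simp add: fun_eq_iff)
  ultimately have "bounded_op (cscale c :: 'a \<Rightarrow> 'a)" by simp
  then show ?thesis by (rule bop_continuous)
qed

lemma csubspace_closure:
  fixes M :: "'a::chilbert set"
  assumes "csubspace M"
  shows "csubspace (closure M)"
proof -
  have M0: "0 \<in> M" and Madd: "\<And>x y. x \<in> M \<Longrightarrow> y \<in> M \<Longrightarrow> x + y \<in> M"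
    and Msc: "\<And>c x. x \<in> M \<Longrightarrow> cscale c x \<in> M"
    using assms unfolding csubspace_def by auto
  have sc: "cscale c ` closure M \<subseteq> closure M" for c
    by (rule image_closure_subset) (auto intro: cscale_continuous Msc closure_subset[THEN subsetD])
  have add1: "(\<lambda>y. a + y) ` closure M \<subseteq> closure M" if "a \<in> M" for a
    by (rule image_closure_subset) (auto intro!: continuous_intros Madd[OF that] closure_subset[THEN subsetD])
  have add2: "(\<lambda>x. x + b) ` closure M \<subseteq> closure M" if "b \<in> closure M" for b
    by (rule image_closure_subset) (use add1 that in \<open>auto intro!: continuous_intros\<close>)
  show ?thesis unfolding csubspace_def
    using M0 sc add2 closure_subset by blast
qed

definition proj :: "'a::complex_inner set \<Rightarrow> 'a \<Rightarrow> 'a" where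
  "proj M x = (SOME p. p \<in> M \<and> (\<forall>m\<in>M. cinner (x - p) m = 0))"

lemma proj_prop:
  fixes M :: "'a::chilbert set"
  assumes "csubspace M" "closed M"
  shows "proj M x \<in> M" "\<And>m. m \<in> M \<Longrightarrow> cinner (x - proj M x) m = 0"
proof -
  have ex: "\<exists>p. p \<in> M \<and> (\<forall>m\<in>M. cinner (x - p) m = 0)"
    using proj_exists[OF assms, of x] by blast
  have "proj M x \<in> M \<and> (\<forall>m\<in>M. cinner (x - proj M x) m = 0)"
    unfolding proj_def by (rule someI_ex[OF ex])
  then show "proj M x \<in> M" "\<And>m. m \<in> M \<Longrightarrow> cinner (x - proj M x) m = 0" by auto
qed

locale cycA =
  fixes A :: "('a::chilbert \<Rightarrow> 'a) set" and v :: 'a and d :: "nat \<Rightarrow> 'a"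
  assumes A_bd: "T \<in> A \<Longrightarrow> bounded_op T"
    and A_adj: "T \<in> A \<Longrightarrow> cadjoint T \<in> A"
    and A_comm: "S \<in> A \<Longrightarrow> T \<in> A \<Longrightarrow> S (T x) = T (S x)"
    and A_id: "id \<in> A"
    and A_zero: "(\<lambda>x. 0) \<in> A"
    and A_plus: "S \<in> A \<Longrightarrow> T \<in> A \<Longrightarrow> (\<lambda>x. S x + T x) \<in> A"
    and A_minus: "S \<in> A \<Longrightarrow> T \<in> A \<Longrightarrow> (\<lambda>x. S x - T x) \<in> A"
    and A_comp: "S \<in> A \<Longrightarrow> T \<in> A \<Longrightarrow> S \<circ> T \<in> A"
    and A_scale: "T \<in> A \<Longrightarrow> (\<lambda>x. cscale c (T x)) \<in> A"
    and dense: "closure (range d) = UNIV"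
begin

definition SP :: "(nat \<Rightarrow> 'a) \<Rightarrow> nat \<Rightarrow> 'a set" where
  "SP f k = {\<Sum>i<k. T i (f i) | T. \<forall>i. T i \<in> A}"

lemma SP_I: "(\<And>i. T i \<in> A) \<Longrightarrow> x = (\<Sum>i<k. T i (f i)) \<Longrightarrow> x \<in> SP f k"
  unfolding SP_def by blast

lemma SP_E: "x \<in> SP f k \<Longrightarrow> \<exists>T. (\<forall>i. T i \<in> A) \<and> x = (\<Sum>i<k. T i (f i))"
  unfolding SP_def by auto

lemma SP_cong: "(\<And>i. i < k \<Longrightarrow> f i = g i) \<Longrightarrow> SP f k = SP g k"
  unfolding SP_def by (auto intro!: sum.cong)

lemma SP_csubspace: "csubspace (SP f k)"
  unfolding csubspace_def
proof (intro conjI ballI allI)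
  show "0 \<in> SP f k" by (rule SP_I[of "\<lambda>i x. 0"]) (simp_all add: A_zero)
  show "x + y \<in> SP f k" if xS: "x \<in> SP f k" and yS: "y \<in> SP f k" for x y
  proof -
    obtain T where T: "\<forall>i. T i \<in> A" "x = (\<Sum>i<k. T i (f i))" using SP_E[OF xS] by auto
    obtain S where S: "\<forall>i. S i \<in> A" "y = (\<Sum>i<k. S i (f i))" using SP_E[OF yS] by auto
    show ?thesis
    proof (rule SP_I)
      show "(\<lambda>z. T i z + S i z) \<in> A" for i using T S A_plus by blast
      show "x + y = (\<Sum>i<k. (\<lambda>z. T i z + S i z) (f i))" using T S by (simp add: sum.distrib)
    qed
  qed
  show "cscale c x \<in> SP f k" if xS: "x \<in> SP f k" for c x
  proof -
    obtain T where T: "\<forall>i. T i \<in> A" "x = (\<Sum>i<k. T i (f i))" using SP_E[OF xS] by auto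
    show ?thesis
    proof (rule SP_I)
      show "(\<lambda>z. cscale c (T i z)) \<in> A" for i using T A_scale by blast
      show "cscale c x = (\<Sum>i<k. (\<lambda>z. cscale c (T i z)) (f i))" using T by (simp add: cscale_sum_right)
    qed
  qed
qed

lemma SP_gen: "T \<in> A \<Longrightarrow> i < k \<Longrightarrow> T (f i) \<in> SP f k"
proof -
  assume T: "T \<in> A" and i: "i < k"
  define G where "G = (\<lambda>j. if j = i then T else (\<lambda>x. 0))"
  have "(\<Sum>j<k. G j (f j)) = (\<Sum>j<k. if j = i then T (f j) else 0)"
    by (rule sum.cong) (auto simp: G_def)
  also have "\<dots> = T (f i)" using i by simp
  finally show ?thesis using T A_zero by (intro SP_I[of G]) (auto simp: G_def)
qed

lemma SP_mono: "k \<le> l \<Longrightarrow> SP f k \<subseteq> SP f l"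
proof
  fix x assume kl: "k \<le> l" and x: "x \<in> SP f k"
  obtain T where T: "\<forall>i. T i \<in> A" "x = (\<Sum>i<k. T i (f i))" using SP_E[OF x] by auto
  define G where "G = (\<lambda>j. if j < k then T j else (\<lambda>x. 0))"
  have "(\<Sum>j<l. G j (f j)) = (\<Sum>j<k. G j (f j))"
    by (rule sum.mono_neutral_right) (use kl in \<open>auto simp: G_def\<close>)
  also have "\<dots> = x" using T by (auto simp: G_def intro!: sum.cong)
  finally show "x \<in> SP f l" using T A_zero by (intro SP_I[of G]) (auto simp: G_def)
qed

primrec WW :: "nat \<Rightarrow> nat \<Rightarrow> 'a" where
  "WW 0 = (\<lambda>i. v)"
| "WW (Suc n) = (WW n)(Suc n := d n - proj (closure (SP (WW n) (Suc n))) (d n))"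

definition w :: "nat \<Rightarrow> 'a" where "w i = WW i i"

lemma WW_stable: "i \<le> n \<Longrightarrow> WW n i = w i"
proof (induction n)
  case 0 then show ?case by (simp add: w_def)
next
  case (Suc n)
  show ?case
  proof (cases "i = Suc n")
    case True then show ?thesis by (simp add: w_def)
  next
    case False then show ?thesis using Suc by simp
  qed
qed

definition MM :: "nat \<Rightarrow> 'a set" where "MM k = closure (SP w k)"

lemma MM_props: "csubspace (MM k)" "closed (MM k)"
  unfolding MM_def by (auto intro: csubspace_closure SP_csubspace)

lemma w0: "w 0 = v" by (simp add: w_def)

lemma wSuc: "w (Suc n) = d n - proj (MM (Suc n)) (d n)"
proof -
  have "SP (WW n) (Suc n) = SP w (Suc n)" by (rule SP_cong) (simp add: WW_stable)
  then show ?thesis by (simp add: w_def MM_def)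
qed

lemma orth_base: "T \<in> A \<Longrightarrow> i < j \<Longrightarrow> cinner (T (w i)) (w j) = 0"
proof -
  assume T: "T \<in> A" and ij: "i < j"
  then obtain n where n: "j = Suc n" "i \<le> n" by (cases j) auto
  have "T (w i) \<in> SP w (Suc n)" using SP_gen[OF T] n by simp
  then have m: "T (w i) \<in> MM (Suc n)" unfolding MM_def using closure_subset by blast
  have "cinner (w j) (T (w i)) = 0"
    unfolding n wSuc using proj_prop(2)[OF MM_props m] .
  then show ?thesis by (metis cinner_commute complex_cnj_zero)
qed

lemma orth: "S \<in> A \<Longrightarrow> T \<in> A \<Longrightarrow> i \<noteq> j \<Longrightarrow> cinner (S (w i)) (T (w j)) = 0"
proof -
  assume S: "S \<in> A" and T: "T \<in> A" and ij: "i \<noteq> j"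
  have R: "cadjoint T \<circ> S \<in> A" using A_comp[OF A_adj[OF T] S] .
  have e: "cinner (S (w i)) (T (w j)) = cinner ((cadjoint T \<circ> S) (w i)) (w j)"
    using adj_eq2[OF A_bd[OF T]] by simp
  show ?thesis
  proof (cases "i < j")
    case True then show ?thesis using e orth_base[OF R] by simp
  next
    case False
    then have ji: "j < i" using ij by simp
    have "cinner ((cadjoint T \<circ> S) (w i)) (w j) = cinner (w i) (cadjoint (cadjoint T \<circ> S) (w j))"
      using adj_eq[OF A_bd[OF R]] .
    also have "\<dots> = cnj (cinner (cadjoint (cadjoint T \<circ> S) (w j)) (w i))"
      by (rule cinner_commute)
    also have "\<dots> = 0" using orth_base[OF A_adj[OF R] ji] by simp
    finally show ?thesis using e by simp
  qed
qed

definition DD :: "'a set" where "DD = (\<Union>k. SP w k)"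

lemma DD_csubspace: "csubspace DD"
  unfolding csubspace_def
proof (intro conjI ballI allI)
  show "0 \<in> DD" unfolding DD_def using SP_csubspace[of w 0] by (auto simp: csubspace_def)
  show "x + y \<in> DD" if xD: "x \<in> DD" and yD: "y \<in> DD" for x y
  proof -
    obtain k l where "x \<in> SP w k" "y \<in> SP w l" using xD yD unfolding DD_def by blast
    then have "x \<in> SP w (max k l)" "y \<in> SP w (max k l)"
      using SP_mono[of k "max k l" w] SP_mono[of l "max k l" w] by auto
    then have "x + y \<in> SP w (max k l)" using SP_csubspace by (auto simp: csubspace_def)
    then show ?thesis by (auto simp: DD_def)
  qed
  show "cscale c x \<in> DD" if xD: "x \<in> DD" for c x
  proof -
    obtain k where "x \<in> SP w k" using xD unfolding DD_def by blast
    then have "cscale c x \<in> SP w k" using SP_csubspace[of w k] unfolding csubspace_def by blast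
    then show ?thesis unfolding DD_def by blast
  qed
qed

lemma DD_dense: "closure DD = UNIV"
proof -
  have cD: "csubspace (closure DD)" by (rule csubspace_closure[OF DD_csubspace])
  have "d n \<in> closure DD" for n
  proof -
    have sub: "SP w (Suc n) \<subseteq> DD" unfolding DD_def by blast
    have "proj (MM (Suc n)) (d n) \<in> MM (Suc n)" by (rule proj_prop(1)[OF MM_props])
    moreover have "MM (Suc n) \<subseteq> closure DD" unfolding MM_def using sub by (rule closure_mono)
    ultimately have p: "proj (MM (Suc n)) (d n) \<in> closure DD" by blast
    have "id (w (Suc n)) \<in> SP w (Suc (Suc n))" by (rule SP_gen[OF A_id]) simp
    then have "w (Suc n) \<in> DD" unfolding DD_def by auto
    then have q: "w (Suc n) \<in> closure DD" using closure_subset by blast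
    have "proj (MM (Suc n)) (d n) + w (Suc n) \<in> closure DD"
      using cD p q unfolding csubspace_def by blast
    moreover have "proj (MM (Suc n)) (d n) + w (Suc n) = d n" by (simp add: wSuc)
    ultimately show ?thesis by simp
  qed
  then have "range d \<subseteq> closure DD" by auto
  then have "closure (range d) \<subseteq> closure (closure DD)" by (rule closure_mono)
  then have "UNIV \<subseteq> closure DD" using dense by simp
  then show ?thesis by (rule top_le)
qed

end

context cycA begin

definition pad :: "nat \<Rightarrow> (nat \<Rightarrow> 'a \<Rightarrow> 'a) \<Rightarrow> nat \<Rightarrow> 'a \<Rightarrow> 'a" where
  "pad k T = (\<lambda>i. if i < k then T i else (\<lambda>x. 0))"

lemma pad_A: "(\<forall>i. T i \<in> A) \<Longrightarrow> \<forall>i. pad k T i \<in> A"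
  by (simp add: pad_def A_zero)

lemma sum_pad: "k \<le> m \<Longrightarrow> (\<Sum>i<m. pad k T i (w i)) = (\<Sum>i<k. T i (w i))"
proof -
  assume km: "k \<le> m"
  have "(\<Sum>i<m. pad k T i (w i)) = (\<Sum>i<k. pad k T i (w i))"
    by (rule sum.mono_neutral_right) (use km in \<open>auto simp: pad_def\<close>)
  also have "\<dots> = (\<Sum>i<k. T i (w i))" by (rule sum.cong) (auto simp: pad_def)
  finally show ?thesis .
qed

lemma inner_sum:
  assumes G: "\<forall>i. G i \<in> A" and Q: "\<forall>i. Q i \<in> A"
  shows "cinner (\<Sum>i<m. G i (w i)) (\<Sum>j<m. Q j (w j)) = (\<Sum>i<m. cinner (G i (w i)) (Q i (w i)))"
proof -
  have "cinner (\<Sum>i<m. G i (w i)) (\<Sum>j<m. Q j (w j)) = (\<Sum>i<m. \<Sum>j<m. cinner (G i (w i)) (Q j (w j)))"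
    by (simp add: cinner_sum_left cinner_sum_right) (rule sum.swap)
  also have "\<dots> = (\<Sum>i<m. cinner (G i (w i)) (Q i (w i)))"
  proof (rule sum.cong[OF refl])
    fix i assume i: "i \<in> {..<m}"
    have "(\<Sum>j<m. cinner (G i (w i)) (Q j (w j))) = (\<Sum>j<m. if i = j then cinner (G i (w i)) (Q j (w j)) else 0)"
      by (rule sum.cong[OF refl]) (use orth G Q in auto)
    also have "\<dots> = cinner (G i (w i)) (Q i (w i))" using i by simp
    finally show "(\<Sum>j<m. cinner (G i (w i)) (Q j (w j))) = cinner (G i (w i)) (Q i (w i))" .
  qed
  finally show ?thesis .
qed

lemma inner_J:
  assumes G: "\<forall>i. G i \<in> A" and Q: "\<forall>i. Q i \<in> A"
  shows "cinner (\<Sum>i<m. cadjoint (G i) (w i)) (\<Sum>i<m. cadjoint (Q i) (w i))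
       = cnj (cinner (\<Sum>i<m. G i (w i)) (\<Sum>i<m. Q i (w i)))"
proof -
  have G': "\<forall>i. cadjoint (G i) \<in> A" and Q': "\<forall>i. cadjoint (Q i) \<in> A" using G Q A_adj by auto
  have "cinner (\<Sum>i<m. cadjoint (G i) (w i)) (\<Sum>i<m. cadjoint (Q i) (w i))
      = (\<Sum>i<m. cinner (cadjoint (G i) (w i)) (cadjoint (Q i) (w i)))"
    by (rule inner_sum[OF G' Q'])
  also have "\<dots> = (\<Sum>i<m. cnj (cinner (G i (w i)) (Q i (w i))))"
  proof (rule sum.cong[OF refl])
    fix i
    have bG: "bounded_op (G i)" and bQ: "bounded_op (Q i)" using G Q A_bd by auto
    have "cinner (cadjoint (G i) (w i)) (cadjoint (Q i) (w i)) = cinner (Q i (cadjoint (G i) (w i))) (w i)"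
      using adj_eq[OF bQ] by simp
    also have "Q i (cadjoint (G i) (w i)) = cadjoint (G i) (Q i (w i))"
      using A_comm G' Q by blast
    also have "cinner (cadjoint (G i) (Q i (w i))) (w i) = cinner (Q i (w i)) (G i (w i))"
      using adj_eq2[OF bG] by simp
    also have "\<dots> = cnj (cinner (G i (w i)) (Q i (w i)))" by (rule cinner_commute)
    finally show "cinner (cadjoint (G i) (w i)) (cadjoint (Q i) (w i)) = cnj (cinner (G i (w i)) (Q i (w i)))" .
  qed
  also have "\<dots> = cnj (cinner (\<Sum>i<m. G i (w i)) (\<Sum>i<m. Q i (w i)))"
    by (simp add: inner_sum[OF G Q])
  finally show ?thesis .
qed

lemma adj_pad: "cadjoint (pad k T i) = pad k (\<lambda>i. cadjoint (T i)) i"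
  by (simp add: pad_def adj_zero)

lemma wd:
  assumes T: "\<forall>i. T i \<in> A" and S: "\<forall>i. S i \<in> A"
    and eq: "(\<Sum>i<k. T i (w i)) = (\<Sum>i<l. S i (w i))"
  shows "(\<Sum>i<k. cadjoint (T i) (w i)) = (\<Sum>i<l. cadjoint (S i) (w i))"
proof -
  define m where "m = max k l"
  have km: "k \<le> m" and lm: "l \<le> m" by (auto simp: m_def)
  define R where "R = (\<lambda>i x. pad k T i x - pad l S i x)"
  have RA: "\<forall>i. R i \<in> A" unfolding R_def using pad_A[OF T] pad_A[OF S] A_minus by blast
  have "(\<Sum>i<m. R i (w i)) = (\<Sum>i<m. pad k T i (w i)) - (\<Sum>i<m. pad l S i (w i))"
    by (simp add: R_def sum_subtractf)
  also have "\<dots> = 0" using eq by (simp add: sum_pad km lm)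
  finally have R0: "(\<Sum>i<m. R i (w i)) = 0" .
  have adjR: "cadjoint (R i) = (\<lambda>x. pad k (\<lambda>i. cadjoint (T i)) i x - pad l (\<lambda>i. cadjoint (S i)) i x)" for i
  proof -
    have "bounded_op (pad k T i)" "bounded_op (pad l S i)" using pad_A[OF T] pad_A[OF S] A_bd by auto
    then show ?thesis unfolding R_def by (simp add: adj_minus adj_pad)
  qed
  define z where "z = (\<Sum>i<m. cadjoint (R i) (w i))"
  have "cinner z z = cnj (cinner (\<Sum>i<m. R i (w i)) (\<Sum>i<m. R i (w i)))"
    unfolding z_def by (rule inner_J[OF RA RA])
  then have "cinner z z = 0" using R0 by simp
  then have "z = 0" by (simp only: cinner_self_eq_0)
  moreover have "z = (\<Sum>i<m. pad k (\<lambda>i. cadjoint (T i)) i (w i)) - (\<Sum>i<m. pad l (\<lambda>i. cadjoint (S i)) i (w i))"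
    unfolding z_def adjR by (simp add: sum_subtractf)
  ultimately show ?thesis by (simp add: sum_pad km lm)
qed

definition J0 :: "'a \<Rightarrow> 'a" where
  "J0 x = (SOME y. \<exists>k T. (\<forall>i. T i \<in> A) \<and> x = (\<Sum>i<k. T i (w i)) \<and> y = (\<Sum>i<k. cadjoint (T i) (w i)))"

lemma J0_eq: assumes T: "\<forall>i. T i \<in> A" shows "J0 (\<Sum>i<k. T i (w i)) = (\<Sum>i<k. cadjoint (T i) (w i))"
proof -
  let ?P = "\<lambda>y. \<exists>l S. (\<forall>i. S i \<in> A) \<and> (\<Sum>i<k. T i (w i)) = (\<Sum>i<l. S i (w i)) \<and> y = (\<Sum>i<l. cadjoint (S i) (w i))"
  have ex: "?P (\<Sum>i<k. cadjoint (T i) (w i))" using T by blast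
  have "?P (J0 (\<Sum>i<k. T i (w i)))" unfolding J0_def by (rule someI[of ?P, OF ex])
  then obtain l S where S: "\<forall>i. S i \<in> A" "(\<Sum>i<k. T i (w i)) = (\<Sum>i<l. S i (w i))"
    "J0 (\<Sum>i<k. T i (w i)) = (\<Sum>i<l. cadjoint (S i) (w i))" by blast
  then show ?thesis using wd[OF T S(1) S(2)] by simp
qed

lemma DD_E: "x \<in> DD \<Longrightarrow> \<exists>k T. (\<forall>i. T i \<in> A) \<and> x = (\<Sum>i<k. T i (w i))"
  unfolding DD_def SP_def by blast

lemma DD_I: "\<forall>i. T i \<in> A \<Longrightarrow> (\<Sum>i<k. T i (w i)) \<in> DD"
  unfolding DD_def SP_def by blast

lemma DD_E2:
  assumes "x \<in> DD" "y \<in> DD"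
  shows "\<exists>m T S. (\<forall>i. T i \<in> A) \<and> (\<forall>i. S i \<in> A) \<and> x = (\<Sum>i<m. T i (w i)) \<and> y = (\<Sum>i<m. S i (w i))"
proof -
  obtain k T where T: "\<forall>i. T i \<in> A" "x = (\<Sum>i<k. T i (w i))" using DD_E[OF assms(1)] by blast
  obtain l S where S: "\<forall>i. S i \<in> A" "y = (\<Sum>i<l. S i (w i))" using DD_E[OF assms(2)] by blast
  have "x = (\<Sum>i<max k l. pad k T i (w i))" using T by (simp add: sum_pad)
  moreover have "y = (\<Sum>i<max k l. pad l S i (w i))" using S by (simp add: sum_pad)
  ultimately show ?thesis using pad_A[OF T(1)] pad_A[OF S(1)] by blast
qed

lemma J0_add:
  assumes "x \<in> DD" "y \<in> DD"
  shows "x + y \<in> DD" "J0 (x + y) = J0 x + J0 y"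
proof -
  obtain m T S where T: "\<forall>i. T i \<in> A" and S: "\<forall>i. S i \<in> A"
    and x: "x = (\<Sum>i<m. T i (w i))" and y: "y = (\<Sum>i<m. S i (w i))"
    using DD_E2[OF assms] by blast
  have TS: "\<forall>i. (\<lambda>z. T i z + S i z) \<in> A" using T S A_plus by blast
  have xy: "x + y = (\<Sum>i<m. (\<lambda>z. T i z + S i z) (w i))" using x y by (simp add: sum.distrib)
  show "x + y \<in> DD" unfolding xy by (rule DD_I[OF TS])
  have "J0 (x + y) = (\<Sum>i<m. cadjoint (\<lambda>z. T i z + S i z) (w i))" unfolding xy by (rule J0_eq[OF TS])
  also have "\<dots> = (\<Sum>i<m. cadjoint (T i) (w i) + cadjoint (S i) (w i))"
    using T S A_bd by (auto intro!: sum.cong simp: adj_plus)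
  also have "\<dots> = J0 x + J0 y" by (simp add: x y J0_eq[OF T] J0_eq[OF S] sum.distrib)
  finally show "J0 (x + y) = J0 x + J0 y" .
qed

lemma J0_inner:
  assumes "x \<in> DD" "y \<in> DD"
  shows "cinner (J0 x) (J0 y) = cnj (cinner x y)"
proof -
  obtain m T S where T: "\<forall>i. T i \<in> A" and S: "\<forall>i. S i \<in> A"
    and x: "x = (\<Sum>i<m. T i (w i))" and y: "y = (\<Sum>i<m. S i (w i))"
    using DD_E2[OF assms] by blast
  show ?thesis unfolding x y J0_eq[OF T] J0_eq[OF S] by (rule inner_J[OF T S])
qed

lemma J0_scale:
  assumes "x \<in> DD"
  shows "cscale c x \<in> DD" "J0 (cscale c x) = cscale (cnj c) (J0 x)"
proof -
  obtain k T where T: "\<forall>i. T i \<in> A" and x: "x = (\<Sum>i<k. T i (w i))" using DD_E[OF assms] by blast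
  have TS: "\<forall>i. (\<lambda>z. cscale c (T i z)) \<in> A" using T A_scale by blast
  have cx: "cscale c x = (\<Sum>i<k. (\<lambda>z. cscale c (T i z)) (w i))" using x by (simp add: cscale_sum_right)
  show "cscale c x \<in> DD" unfolding cx by (rule DD_I[OF TS])
  have "J0 (cscale c x) = (\<Sum>i<k. cadjoint (\<lambda>z. cscale c (T i z)) (w i))" unfolding cx by (rule J0_eq[OF TS])
  also have "\<dots> = (\<Sum>i<k. cscale (cnj c) (cadjoint (T i) (w i)))"
    using T A_bd by (auto intro!: sum.cong simp: adj_scale)
  also have "\<dots> = cscale (cnj c) (J0 x)" by (simp add: x J0_eq[OF T] cscale_sum_right)
  finally show "J0 (cscale c x) = cscale (cnj c) (J0 x)" .
qed

lemma J0_J0: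
  assumes "x \<in> DD"
  shows "J0 x \<in> DD" "J0 (J0 x) = x"
proof -
  obtain k T where T: "\<forall>i. T i \<in> A" and x: "x = (\<Sum>i<k. T i (w i))" using DD_E[OF assms] by blast
  have T': "\<forall>i. cadjoint (T i) \<in> A" using T A_adj by blast
  show "J0 x \<in> DD" unfolding x J0_eq[OF T] by (rule DD_I[OF T'])
  have "J0 (J0 x) = (\<Sum>i<k. cadjoint (cadjoint (T i)) (w i))" unfolding x J0_eq[OF T] by (rule J0_eq[OF T'])
  also have "\<dots> = x" using T A_bd by (simp add: x adj_adj)
  finally show "J0 (J0 x) = x" .
qed

lemma J0_op:
  assumes S: "S \<in> A" and "x \<in> DD"
  shows "S x \<in> DD" "J0 (S x) = cadjoint S (J0 x)"
proof -
  obtain k T where T: "\<forall>i. T i \<in> A" and x: "x = (\<Sum>i<k. T i (w i))" using DD_E[OF assms(2)] by blast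
  have bS: "bounded_op S" using S A_bd by blast
  have TS: "\<forall>i. S \<circ> T i \<in> A" using T S A_comp by blast
  have sx: "S x = (\<Sum>i<k. (S \<circ> T i) (w i))" using x by (simp add: bop_sum[OF bS])
  show "S x \<in> DD" unfolding sx by (rule DD_I[OF TS])
  have "J0 (S x) = (\<Sum>i<k. cadjoint (S \<circ> T i) (w i))" unfolding sx by (rule J0_eq[OF TS])
  also have "\<dots> = (\<Sum>i<k. cadjoint S (cadjoint (T i) (w i)))"
  proof (rule sum.cong[OF refl])
    fix i
    have bT: "bounded_op (T i)" using T A_bd by blast
    have "cadjoint (S \<circ> T i) (w i) = cadjoint (T i) (cadjoint S (w i))" by (simp add: adj_comp[OF bS bT])
    also have "\<dots> = cadjoint S (cadjoint (T i) (w i))" using A_comm A_adj T S by blast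
    finally show "cadjoint (S \<circ> T i) (w i) = cadjoint S (cadjoint (T i) (w i))" .
  qed
  also have "\<dots> = cadjoint S (J0 x)"
    by (simp add: x J0_eq[OF T] bop_sum[OF adj_bounded[OF bS]])
  finally show "J0 (S x) = cadjoint S (J0 x)" .
qed

lemma J0_v: "v \<in> DD" "J0 v = v"
proof -
  have I: "\<forall>i. (\<lambda>i. id) i \<in> A" using A_id by simp
  have v: "v = (\<Sum>i<1. (\<lambda>i. id) i (w i))" by (simp add: w0)
  show "v \<in> DD" by (subst v) (rule DD_I[OF I])
  show "J0 v = v" by (subst (1) v, subst J0_eq[OF I]) (simp add: adj_id w0)
qed

lemma J0_norm: "x \<in> DD \<Longrightarrow> norm (J0 x) = norm x"
proof -
  assume x: "x \<in> DD"
  have "cinner (J0 x) (J0 x) = cinner x x" using J0_inner[OF x x] by (metis cinner_commute)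
  then have "(norm (J0 x))^2 = (norm x)^2" by (simp add: norm_sq_cinner)
  then show ?thesis by (simp add: power2_eq_iff_nonneg)
qed

lemma J0_diff: "x \<in> DD \<Longrightarrow> y \<in> DD \<Longrightarrow> x - y \<in> DD \<and> J0 (x - y) = J0 x - J0 y"
proof -
  assume x: "x \<in> DD" and y: "y \<in> DD"
  have e: "x - y = x + cscale (-1) y" by (simp add: cscale_minus_left)
  have y': "cscale (-1) y \<in> DD" by (rule J0_scale(1)[OF y])
  show ?thesis unfolding e using J0_add[OF x y'] J0_scale(2)[OF y, of "-1"] by (simp add: cscale_minus_left)
qed

end

lemma bop_cont_comp:
  "bounded_op S \<Longrightarrow> continuous_on X f \<Longrightarrow> continuous_on X (\<lambda>x. S (f x))"
  using bop_linear bounded_linear.continuous_on by blast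

lemma cscale_cont_comp:
  fixes f :: "'b::topological_space \<Rightarrow> 'a::chilbert"
  shows "continuous_on X f \<Longrightarrow> continuous_on X (\<lambda>x. cscale c (f x))"
  using cscale_continuous continuous_on_compose2 by blast

lemma cinner_left_bl: "bounded_linear (\<lambda>x::'a::complex_inner. cinner x c)"
proof (rule bounded_linear_intro[where K="norm c"])
  show "cinner (x + y) c = cinner x c + cinner y c" for x y by (rule cinner_add_left)
  show "cinner (r *\<^sub>R x) c = r *\<^sub>R cinner x c" for r x
    by (simp add: scaleR_cscale cinner_cscale_left scaleR_conv_of_real)
  show "norm (cinner x c) \<le> norm x * norm c" for x by (rule cauchy_schwarz)
qed

lemma cinner_left_cont:
  fixes f :: "'b::topological_space \<Rightarrow> 'a::complex_inner"
  shows "continuous_on X f \<Longrightarrow> continuous_on X (\<lambda>x. cinner (f x) c)"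
  using bounded_linear.continuous_on[OF cinner_left_bl] by blast

lemma cinner_right_cont:
  fixes f :: "'b::topological_space \<Rightarrow> 'a::complex_inner"
  shows "continuous_on X f \<Longrightarrow> continuous_on X (\<lambda>x. cinner c (f x))"
proof -
  assume "continuous_on X f"
  then have "continuous_on X (\<lambda>x. cnj (cinner (f x) c))" by (intro continuous_on_cnj cinner_left_cont)
  moreover have "(\<lambda>x. cnj (cinner (f x) c)) = (\<lambda>x. cinner c (f x))" by (metis cinner_commute)
  ultimately show ?thesis by (simp only:)
qed

context cycA begin

lemma J0_uc: "uniformly_continuous_on DD J0"
  unfolding uniformly_continuous_on_def
proof (intro allI impI)
  fix e :: real assume e: "e > 0"
  show "\<exists>d>0. \<forall>x\<in>DD. \<forall>x'\<in>DD. dist x' x < d \<longrightarrow> dist (J0 x') (J0 x) < e"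
  proof (intro exI[of _ e] conjI ballI impI)
    fix x x' assume x: "x \<in> DD" and x': "x' \<in> DD" and dd: "dist x' x < e"
    have "dist (J0 x') (J0 x) = norm (J0 (x' - x))" using J0_diff[OF x' x] by (simp add: dist_norm)
    also have "\<dots> = norm (x' - x)" using J0_diff[OF x' x] J0_norm by blast
    finally show "dist (J0 x') (J0 x) < e" using dd by (simp add: dist_norm)
  qed (rule e)
qed

definition J :: "'a \<Rightarrow> 'a" where
  "J = (SOME g. uniformly_continuous_on UNIV g \<and> (\<forall>x\<in>DD. J0 x = g x))"

lemma J_props: "uniformly_continuous_on UNIV J" "\<And>x. x \<in> DD \<Longrightarrow> J x = J0 x"
proof -
  obtain g where "uniformly_continuous_on (closure DD) g" "\<And>x. x \<in> DD \<Longrightarrow> J0 x = g x"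
    using uniformly_continuous_on_extension_on_closure[OF J0_uc] by metis
  then have ex: "\<exists>g. uniformly_continuous_on UNIV g \<and> (\<forall>x\<in>DD. J0 x = g x)"
    using DD_dense by auto
  have "uniformly_continuous_on UNIV J \<and> (\<forall>x\<in>DD. J0 x = J x)"
    unfolding J_def by (rule someI_ex[OF ex])
  then show "uniformly_continuous_on UNIV J" "\<And>x. x \<in> DD \<Longrightarrow> J x = J0 x" by auto
qed

lemma J_cont_comp [continuous_intros]: "continuous_on X f \<Longrightarrow> continuous_on X (\<lambda>x. J (f x))"
proof -
  assume f: "continuous_on X f"
  have "continuous_on UNIV J" using J_props(1) uniformly_continuous_imp_continuous by blast
  then show ?thesis using continuous_on_compose2[OF _ f] by blast
qed

lemma dense_eq:
  fixes f g :: "'a \<Rightarrow> 'b::t2_space"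
  assumes "continuous_on UNIV f" "continuous_on UNIV g" "\<And>x. x \<in> DD \<Longrightarrow> f x = g x"
  shows "f x = g x"
proof -
  have "closed {x. f x = g x}" by (rule closed_Collect_eq[OF assms(1,2)])
  moreover have "DD \<subseteq> {x. f x = g x}" using assms(3) by blast
  ultimately have "closure DD \<subseteq> {x. f x = g x}" by (rule closure_minimal[rotated])
  then show ?thesis using DD_dense by blast
qed

lemma J_J: "J (J x) = x"
proof (rule dense_eq[of "\<lambda>x. J (J x)" "\<lambda>x. x"])
  show "continuous_on UNIV (\<lambda>x. J (J x))" by (intro continuous_intros)
  show "continuous_on UNIV (\<lambda>x. x)" by (intro continuous_intros)
  fix x assume x: "x \<in> DD"
  then show "J (J x) = x" using J_props(2) J0_J0[OF x] by simp
qed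

lemma J_add: "J (x + y) = J x + J y"
proof -
  have step: "J (x + y) = J x + J y" if y: "y \<in> DD" for x y
  proof (rule dense_eq[of "\<lambda>x. J (x + y)" "\<lambda>x. J x + J y"])
    show "continuous_on UNIV (\<lambda>x. J (x + y))" by (intro continuous_intros)
    show "continuous_on UNIV (\<lambda>x. J x + J y)" by (intro continuous_intros)
    fix x assume x: "x \<in> DD"
    show "J (x + y) = J x + J y" using J_props(2) J0_add[OF x y] x y by simp
  qed
  show ?thesis
  proof (rule dense_eq[of "\<lambda>y. J (x + y)" "\<lambda>y. J x + J y"])
    show "continuous_on UNIV (\<lambda>y. J (x + y))" by (intro continuous_intros)
    show "continuous_on UNIV (\<lambda>y. J x + J y)" by (intro continuous_intros)
    fix y assume "y \<in> DD" then show "J (x + y) = J x + J y" by (rule step)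
  qed
qed

lemma J_scale: "J (cscale c x) = cscale (cnj c) (J x)"
proof (rule dense_eq[of "\<lambda>x. J (cscale c x)" "\<lambda>x. cscale (cnj c) (J x)"])
  show "continuous_on UNIV (\<lambda>x. J (cscale c x))" by (intro continuous_intros cscale_cont_comp)
  show "continuous_on UNIV (\<lambda>x. cscale (cnj c) (J x))" by (intro continuous_intros cscale_cont_comp)
  fix x assume x: "x \<in> DD"
  show "J (cscale c x) = cscale (cnj c) (J x)" using J_props(2) J0_scale[OF x] x by simp
qed

lemma J_inner: "cinner (J x) (J y) = cnj (cinner x y)"
proof -
  have step: "cinner (J x) (J y) = cnj (cinner x y)" if y: "y \<in> DD" for x y
  proof (rule dense_eq[of "\<lambda>x. cinner (J x) (J y)" "\<lambda>x. cnj (cinner x y)"])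
    show "continuous_on UNIV (\<lambda>x. cinner (J x) (J y))" by (intro continuous_intros cinner_left_cont)
    show "continuous_on UNIV (\<lambda>x. cnj (cinner x y))" by (intro continuous_intros cinner_left_cont)
    fix x assume x: "x \<in> DD"
    show "cinner (J x) (J y) = cnj (cinner x y)" using J_props(2) J0_inner[OF x y] x y by simp
  qed
  show ?thesis
  proof (rule dense_eq[of "\<lambda>y. cinner (J x) (J y)" "\<lambda>y. cnj (cinner x y)"])
    show "continuous_on UNIV (\<lambda>y. cinner (J x) (J y))" by (intro continuous_intros cinner_right_cont)
    show "continuous_on UNIV (\<lambda>y. cnj (cinner x y))" by (intro continuous_intros cinner_right_cont)
    fix y assume "y \<in> DD" then show "cinner (J x) (J y) = cnj (cinner x y)" by (rule step)
  qed
qed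

lemma J_norm: "norm (J x) = norm x"
proof -
  have "cinner (J x) (J x) = cinner x x" using J_inner[of x x] by (metis cinner_commute)
  then have "(norm (J x))^2 = (norm x)^2" by (simp add: norm_sq_cinner)
  then show ?thesis by (simp add: power2_eq_iff_nonneg)
qed

lemma J_op: assumes S: "S \<in> A" shows "J (S (J x)) = cadjoint S x"
proof (rule dense_eq[of "\<lambda>x. J (S (J x))" "\<lambda>x. cadjoint S x"])
  have bS: "bounded_op S" using S A_bd by blast
  show "continuous_on UNIV (\<lambda>x. J (S (J x)))"
    by (intro continuous_intros bop_cont_comp[OF bS])
  show "continuous_on UNIV (\<lambda>x. cadjoint S x)"
    by (rule bop_continuous[OF adj_bounded[OF bS]])
  fix x assume x: "x \<in> DD"
  have "J x = J0 x" "J0 x \<in> DD" using J_props(2) J0_J0(1) x by auto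
  moreover have "S (J0 x) \<in> DD" "J0 (S (J0 x)) = cadjoint S (J0 (J0 x))"
    using J0_op[OF S \<open>J0 x \<in> DD\<close>] by auto
  ultimately show "J (S (J x)) = cadjoint S x" using J_props(2) J0_J0(2)[OF x] by simp
qed

lemma J_v: "J v = v"
  using J_props(2) J0_v by simp

lemma J_conj: "conjugation J"
  unfolding conjugation_def using J_add J_scale J_norm J_J by blast

end

lemma unitary_facts:
  fixes U :: "'a::chilbert \<Rightarrow> 'a"
  assumes "unitary_op U"
  shows "bounded_op U" "\<And>x. cadjoint U (U x) = x" "\<And>x. U (cadjoint U x) = x"
    "\<And>x y. cinner (U x) (U y) = cinner x y"
proof -
  show bU: "bounded_op U" using assms by (simp add: unitary_op_def)
  show 1: "\<And>x. cadjoint U (U x) = x" using assms by (simp add: unitary_op_def fun_eq_iff)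
  show "\<And>x. U (cadjoint U x) = x" using assms by (simp add: unitary_op_def fun_eq_iff)
  show "\<And>x y. cinner (U x) (U y) = cinner x y" using adj_eq[OF bU] 1 by metis
qed

theorem theorem4p1:
  fixes N U :: "'a::chilbert \<Rightarrow> 'a" and a :: complex and v :: 'a
  assumes "is_separable TYPE('a)"
    and "normal_op N"
    and "unitary_op U"
    and "U \<in> vN_generated N"
  shows "complex_symmetric (\<lambda>x. N x + cscale a (rank_one (U v) v x))"
proof -
  note sep = assms(1) and nN = assms(2) and uU = assms(3) and UvN = assms(4)
  have bN: "bounded_op N" using nN by (simp add: normal_op_def)
  have nn: "\<And>x. N (cadjoint N x) = cadjoint N (N x)" using nN by (simp add: normal_op_def fun_eq_iff)
  have bN': "bounded_op (cadjoint N)" by (rule adj_bounded[OF bN])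
  note uf = unitary_facts[OF uU]
  have bU: "bounded_op U" by (rule uf(1))
  have bU': "bounded_op (cadjoint U)" by (rule adj_bounded[OF bU])
  obtain D :: "'a set" where D: "countable D" "closure D = UNIV"
    using sep unfolding is_separable_def by blast
  have Dne: "D \<noteq> {}" using D(2) by auto
  define d where "d = from_nat_into D"
  have dense: "closure (range d) = UNIV" using D Dne by (simp add: d_def)
  let ?X0 = "{N, cadjoint N}"
  have bX0: "\<forall>R\<in>?X0. bounded_op R" using bN bN' by auto
  have sX0: "starclosed ?X0" by (simp add: starclosed_def adj_adj[OF bN])
  have Ub: "U \<in> comm (comm ?X0)" by (rule in_vN_generated_bicomm[OF nN UvN])
  have sB: "starclosed (comm (comm ?X0))" by (rule comm_star[OF comm_bX comm_star[OF bX0 sX0]])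
  have U'b: "cadjoint U \<in> comm (comm ?X0)" using Ub sB by (simp add: starclosed_def)
  note Nc = normal_in_comm[OF nN]
  have UN: "U (N x) = N (U x)" for x using comm_commute[OF Ub Nc(1)] .
  have UN': "U (cadjoint N x) = cadjoint N (U x)" for x using comm_commute[OF Ub Nc(2)] .
  have U'N: "cadjoint U (N x) = N (cadjoint U x)" for x using comm_commute[OF U'b Nc(1)] .
  have U'N': "cadjoint U (cadjoint N x) = cadjoint N (cadjoint U x)" for x using comm_commute[OF U'b Nc(2)] .
  define X where "X = {N, cadjoint N, U, cadjoint U}"
  have bX: "\<forall>R\<in>X. bounded_op R" using bN bN' bU bU' by (auto simp: X_def)
  have sX: "starclosed X" by (auto simp: starclosed_def X_def adj_adj[OF bN] adj_adj[OF bU])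
  have Xcomm: "\<And>R R'. R \<in> X \<Longrightarrow> R' \<in> X \<Longrightarrow> R (R' x) = R' (R x)" for x
    unfolding X_def using UN UN' U'N U'N' nn uf(2) uf(3) by auto
  have XcX: "X \<subseteq> comm X"
    using bX Xcomm by (auto simp: comm_def fun_eq_iff)
  define A where "A = comm (comm X)"
  have bcX: "\<forall>R\<in>comm X. bounded_op R" by (rule comm_bX)
  have scX: "starclosed (comm X)" by (rule comm_star[OF bX sX])
  have sA: "starclosed A" unfolding A_def by (rule comm_star[OF bcX scX])
  have XA: "X \<subseteq> A"
  proof
    fix R assume R: "R \<in> X"
    have "R \<circ> S = S \<circ> R" if S: "S \<in> comm X" for S
      using S R unfolding comm_def by auto
    then show "R \<in> A" unfolding A_def comm_def using bX R by auto
  qed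
  have AcX: "A \<subseteq> comm X"
  proof
    fix T assume T: "T \<in> A"
    have "T (R x) = R (T x)" if R: "R \<in> X" for R x
      using comm_commute[OF T[unfolded A_def] XcX[THEN subsetD, OF R]] .
    then show "T \<in> comm X" using T comm_bounded[of T] by (auto simp: A_def comm_def fun_eq_iff)
  qed
  interpret cycA A v d
  proof
    show "bounded_op T" if "T \<in> A" for T using that by (simp add: A_def comm_bounded)
    show "cadjoint T \<in> A" if "T \<in> A" for T using that sA by (simp add: starclosed_def)
    show "S (T x) = T (S x)" if "S \<in> A" "T \<in> A" for S T x
      using comm_commute[OF that(1)[unfolded A_def] AcX[THEN subsetD, OF that(2)]] .
    show "id \<in> A" by (simp add: A_def comm_id)
    show "(\<lambda>x. 0) \<in> A" unfolding A_def by (rule comm_zero[OF bcX])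
    show "(\<lambda>x. S x + T x) \<in> A" if "S \<in> A" "T \<in> A" for S T
      using comm_plus[OF bcX] that by (simp add: A_def)
    show "(\<lambda>x. S x - T x) \<in> A" if "S \<in> A" "T \<in> A" for S T
      using comm_minus[OF bcX] that by (simp add: A_def)
    show "S \<circ> T \<in> A" if "S \<in> A" "T \<in> A" for S T
      using comm_comp that by (simp add: A_def)
    show "(\<lambda>x. cscale c (T x)) \<in> A" if "T \<in> A" for c T
      using comm_scale[OF bcX] that by (simp add: A_def)
    show "closure (range d) = UNIV" by (rule dense)
  qed
  have UA: "U \<in> A" and N'A: "cadjoint N \<in> A" using XA by (auto simp: X_def)
  have UN'A: "U \<circ> cadjoint N \<in> A" using A_comp[OF UA N'A] .
  define C where "C = U \<circ> J"
  have JU: "J (U (J x)) = cadjoint U x" for x using J_op[OF UA] .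
  have C_conj: "conjugation C"
    unfolding conjugation_def C_def
  proof (intro conjI allI)
    show "(U \<circ> J) (x + y) = (U \<circ> J) x + (U \<circ> J) y" for x y by (simp add: J_add bop_add[OF bU])
    show "(U \<circ> J) (cscale c x) = cscale (cnj c) ((U \<circ> J) x)" for c x by (simp add: J_scale bop_cscale[OF bU])
    show "norm ((U \<circ> J) x) = norm x" for x
    proof -
      have "cinner (U (J x)) (U (J x)) = cinner x x" using uf(4) J_inner[of x x] by (metis cinner_commute)
      then have "(norm (U (J x)))^2 = (norm x)^2" by (simp add: norm_sq_cinner)
      then show ?thesis by (simp add: power2_eq_iff_nonneg)
    qed
    show "(U \<circ> J) ((U \<circ> J) x) = x" for x by (simp add: JU uf(3))
  qed
  define T where "T = (\<lambda>x. N x + cscale a (rank_one (U v) v x))"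
  define Ts where "Ts = (\<lambda>y. cadjoint N y + cscale (cnj a) (cscale (cinner y (U v)) v))"
  have cc: "cnj (cinner y (U v)) = cinner (U v) y" for y by (metis cinner_commute)
  have adjT: "cadjoint T = Ts"
  proof (rule adj_unique)
    fix x y
    show "cinner (T x) y = cinner x (Ts y)"
      by (simp add: T_def Ts_def rank_one_def cinner_add_left cinner_add_right cinner_cscale_left
          cinner_cscale_right adj_eq[OF bN] cc mult.commute mult.left_commute)
  qed
  have main: "T x = C (Ts (C x))" for x
  proof -
    have "C (Ts (C x)) = U (J (cadjoint N (U (J x)))) +
        U (J (cscale (cnj a) (cscale (cinner (U (J x)) (U v)) v)))"
      by (simp add: C_def Ts_def J_add bop_add[OF bU])
    also have "U (J (cadjoint N (U (J x)))) = N x"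
    proof -
      have "J (cadjoint N (U (J x))) = J ((U \<circ> cadjoint N) (J x))" by (simp add: UN')
      also have "\<dots> = cadjoint (U \<circ> cadjoint N) x" by (rule J_op[OF UN'A])
      also have "\<dots> = N (cadjoint U x)" by (simp add: adj_comp[OF bU bN'] adj_adj[OF bN])
      finally show ?thesis by (simp add: UN uf(3))
    qed
    also have "U (J (cscale (cnj a) (cscale (cinner (U (J x)) (U v)) v))) = cscale a (rank_one (U v) v x)"
    proof -
      have "cnj (cinner (U (J x)) (U v)) = cinner x v"
      proof -
        have "cnj (cinner (U (J x)) (U v)) = cnj (cinner (J x) (J v))" by (simp add: uf(4) J_v)
        also have "\<dots> = cinner x v" by (simp add: J_inner)
        finally show ?thesis .
      qed
      then show ?thesis
        by (simp add: J_scale J_v bop_cscale[OF bU] rank_one_def)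
    qed
    finally show ?thesis by (simp add: T_def)
  qed
  show ?thesis
    unfolding complex_symmetric_def T_def[symmetric]
    using C_conj main adjT by (intro exI[of _ C]) (auto simp: fun_eq_iff)
qed

end
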